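(* Let $q$ be a prime power, $2\le n\le m$, and $\mathcal{C}\subseteq\mathrm{Mat}$ a non-zero rank-metric code of minimum distance $d$. The following are equivalent: (1) $\mathcal{C}$ is MRD; (2) $\rho_{\mathrm c}(\mathcal{C},J)=\dim(J)$ for all subspaces $J\subseteq\mathbb{F}_q^n$ with $\dim(J)\le n-d+1$; (3) $\rho_{\mathrm c}(\mathcal{C},J)=\dim(J)$ for some subspace $J\subseteq\mathbb{F}_q^n$ with $\dim(J)=n-d+1$.
   Context: $\mathrm{Mat}$ is the $\mathbb{F}_q$-space of $n\times m$ matrices over $\mathbb{F}_q$; a rank-metric code is an $\mathbb{F}_q$-linear subspace, with minimum distance $d(\mathcal{C})=\min\{\mathrm{rk}(M)\mid M\in\mathcal{C},M\ne0\}$. A non-zero code with minimum distance $d$ satisfies $\dim\mathcal{C}\le m(n-d+1)$, and is MRD if equality holds. For a subspace $J\subseteq\mathbb{F}_q^n$, $\mathcal{C}(J,\mathrm c)=\{M\in\mathcal{C}\mid\mathrm{colsp}(M)\subseteq J\}$ and $\rho_{\mathrm c}(\mathcal{C},J)=(\dim\mathcal{C}-\dim\mathcal{C}(J^\perp,\mathrm c))/m$, with $J^\perp$ the orthogonal complement for the standard inner product. *)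

theory Defs
  imports "HOL-Analysis.Analysis"
begin

text \<open>Matrices of size n x m over a finite field are modelled as 'a^'m^'n
  (rows indexed by 'n, columns by 'm). Scalar multiplication of matrices:\<close>

definition mscale :: "'a::field \<Rightarrow> 'a^'m^'n \<Rightarrow> 'a^'m^'n" where
  "mscale c M = (\<chi> i j. c * M$i$j)"

interpretation mat: vector_space "mscale :: 'a::field \<Rightarrow> 'a^'m^'n \<Rightarrow> 'a^'m^'n"
  by unfold_locales (auto simp: mscale_def vec_eq_iff algebra_simps)

definition colsp :: "'a::field^'m^'n \<Rightarrow> ('a^'n) set" where
  "colsp M = vec.span (columns M)"

definition min_dist :: "('a::field^'m^'n) set \<Rightarrow> nat" where
  "min_dist C = Min {rank M | M. M \<in> C \<and> M \<noteq> 0}"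

definition orth :: "('a::field^'n) set \<Rightarrow> ('a^'n) set" where
  "orth J = {x. \<forall>y\<in>J. (\<Sum>i\<in>UNIV. x$i * y$i) = 0}"

definition col_subcode :: "('a::field^'m^'n) set \<Rightarrow> ('a^'n) set \<Rightarrow> ('a^'m^'n) set" where
  "col_subcode C J = {M \<in> C. colsp M \<subseteq> J}"

definition rho_c :: "('a::field^'m^'n) set \<Rightarrow> ('a^'n) set \<Rightarrow> real" where
  "rho_c C J = (real (mat.dim C) - real (mat.dim (col_subcode C (orth J)))) / real CARD('m)"

definition is_MRD :: "('a::field^'m^'n) set \<Rightarrow> bool" where
  "is_MRD C \<longleftrightarrow> mat.dim C = CARD('m) * (CARD('n) - min_dist C + 1)"

end

theory Submission
  imports Defs
begin


lemma rank_nullity_vec: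
  fixes f :: "'a::field^'n \<Rightarrow> 'a^'p"
  assumes lf: "Vector_Spaces.linear (*s) (*s) f"
  shows "vec.dim {x. f x = 0} + vec.dim (range f) = CARD('n)"
proof -
  define K where "K = {x. f x = 0}"
  have sK: "vec.subspace K" unfolding K_def using lf by (rule vec.linear_subspace_kernel)
  have "\<exists>B. B \<subseteq> K \<and> vec.independent B \<and> K \<subseteq> vec.span B \<and> card B = vec.dim K"
    by (meson vec.basis_exists)
  then obtain B where B: "B \<subseteq> K" "vec.independent B" "K \<subseteq> vec.span B" "card B = vec.dim K"
    by blast
  obtain B' where B': "B \<subseteq> B'" "B' \<subseteq> UNIV" "vec.independent B'" "UNIV \<subseteq> vec.span B'"
    by (rule vec.maximal_independent_subset_extend[OF subset_UNIV B(2)])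
  have fB': "finite B'" using B'(3) vec.finiteI_independent by blast
  define C where "C = B' - B"
  have fB: "finite B" "finite C" using fB' B'(1) C_def by (auto intro: finite_subset)
  have iC: "vec.independent C" using B'(3) vec.independent_mono C_def by blast
  have spB: "vec.span B = K" using B sK vec.span_minimal by blast
  have BC: "B' = B \<union> C" "B \<inter> C = {}" using B'(1) C_def by auto
  have "vec.dim {x + y |x y. x \<in> vec.span B \<and> y \<in> vec.span C} + vec.dim (vec.span B \<inter> vec.span C)
      = vec.dim (vec.span B) + vec.dim (vec.span C)"
    by (rule vec.dim_sums_Int) auto
  moreover have "{x + y |x y. x \<in> vec.span B \<and> y \<in> vec.span C} = vec.span B'"
    unfolding BC(1) by (rule vec.span_Un[symmetric])
  moreover have "vec.dim (vec.span B') = card B + card C"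
    using B'(3) BC fB by (simp add: vec.dim_eq_card_independent card_Un_disjoint)
  moreover have "vec.dim (vec.span B) = card B" "vec.dim (vec.span C) = card C"
    using B(2) iC by (simp_all add: vec.dim_eq_card_independent)
  ultimately have "vec.dim (vec.span B \<inter> vec.span C) = 0" by simp
  hence int0: "vec.span B \<inter> vec.span C \<subseteq> {0}" by simp
  have inj: "inj_on f (vec.span C)"
  proof (rule inj_onI)
    fix x y assume xy: "x \<in> vec.span C" "y \<in> vec.span C" "f x = f y"
    have "x - y \<in> vec.span C" using xy vec.span_diff by blast
    moreover have "x - y \<in> vec.span B" using xy spB using vec.linear_diff[OF lf] by (simp add: K_def)
    ultimately show "x = y" using int0 by auto
  qed
  have "range f \<subseteq> vec.span (f ` C)"
  proof
    fix z assume "z \<in> range f"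
    then obtain x where x: "z = f x" by auto
    have "x \<in> vec.span B'" using B'(4) by auto
    hence "x \<in> vec.span (B \<union> C)" using BC(1) by simp
    then obtain b c where bc: "b \<in> vec.span B" "c \<in> vec.span C" "x = b + c"
      unfolding vec.span_Un by blast
    have "f b = 0" using bc spB K_def by auto
    hence "z = f c" using x bc using vec.linear_add[OF lf] by simp
    moreover have "f c \<in> f ` vec.span C" using bc by blast
    ultimately show "z \<in> vec.span (f ` C)" using vec.linear_span_image[OF lf] by simp
  qed
  hence "vec.dim (range f) \<le> vec.dim (f ` C)"
    by (rule vec.dim_mono)
  moreover have "vec.dim (f ` C) \<le> vec.dim (range f)" by (rule vec.dim_subset) auto
  moreover have "vec.dim (f ` C) = vec.dim C" by (rule vec.dim_image_eq[OF lf inj])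
  moreover have "vec.dim C = card C" using iC by (simp add: vec.dim_eq_card_independent)
  moreover have "card B + card C = CARD('n)"
  proof -
    have sp: "vec.span B' = UNIV" using B'(4) by auto
    have "vec.dim B' = vec.dim (vec.span B')" by simp
    also have "\<dots> = CARD('n)" unfolding sp by (rule vec_dim_card)
    finally show ?thesis using B'(3) BC fB by (simp add: vec.dim_eq_card_independent card_Un_disjoint vec_dim_card)
  qed
  ultimately show ?thesis using B(4) K_def by simp
qed

lemma row_le_col:
  fixes M :: "'a::field^'m^'n" and W :: "('a^'n) set"
  assumes "columns M \<subseteq> vec.span W" "finite W"
  shows "vec.dim (rows M) \<le> card W"
proof -
  have "\<forall>j. \<exists>u. column j M = (\<Sum>w\<in>W. u w *s w)"
    using assms vec.span_finite[OF assms(2)] unfolding columns_def by blast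
  then obtain u where u: "\<And>j. column j M = (\<Sum>w\<in>W. u j w *s w)" by metis
  define r where "r w = (\<chi> j. u j w)" for w
  have "rows M \<subseteq> vec.span (r ` W)"
  proof
    fix x assume "x \<in> rows M"
    then obtain i where x: "x = row i M" unfolding rows_def by auto
    have "x = (\<Sum>w\<in>W. (w $ i) *s r w)"
    proof (subst vec_eq_iff, intro allI)
      fix j
      have "x $ j = column j M $ i" by (simp add: x row_def column_def)
      also have "\<dots> = (\<Sum>w\<in>W. u j w * w $ i)" by (simp add: u sum_component)
      also have "\<dots> = (\<Sum>w\<in>W. (w $ i) *s r w) $ j" by (simp add: sum_component r_def mult.commute)
      finally show "x $ j = (\<Sum>w\<in>W. (w $ i) *s r w) $ j" .
    qed
    also have "\<dots> \<in> vec.span (r ` W)"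
      by (intro vec.span_sum vec.span_scale vec.span_base) auto
    finally show "x \<in> vec.span (r ` W)" .
  qed
  hence "vec.dim (rows M) \<le> card (r ` W)" using vec.dim_le_card assms(2) by blast
  also have "\<dots> \<le> card W" using assms(2) card_image_le by blast
  finally show ?thesis .
qed



context vector_space begin
lemma card_span_indep:
  assumes fa: "finite (UNIV::'a set)" and fB: "finite B" and iB: "independent B"
  shows "card (span B) = card (UNIV::'a set) ^ card B"
proof -
  define g where "g u = (\<Sum>v\<in>B. u v *s v)" for u
  have "span B = g ` (PiE B (\<lambda>_. UNIV))"
  proof -
    have "span B = range g" unfolding g_def by (rule span_finite[OF fB])
    also have "\<dots> = g ` (PiE B (\<lambda>_. UNIV))"
    proof
      show "range g \<subseteq> g ` (PiE B (\<lambda>_. UNIV))"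
      proof
        fix z assume "z \<in> range g"
        then obtain u where z: "z = g u" by auto
        have "g u = g (restrict u B)" unfolding g_def by (rule sum.cong) auto
        thus "z \<in> g ` (PiE B (\<lambda>_. UNIV))" using z by auto
      qed
    qed auto
    finally show ?thesis .
  qed
  moreover have "inj_on g (PiE B (\<lambda>_. UNIV))"
  proof (rule inj_onI)
    fix u w assume uw: "u \<in> PiE B (\<lambda>_. UNIV)" "w \<in> PiE B (\<lambda>_. UNIV)" "g u = g w"
    have sum0: "(\<Sum>v\<in>B. (u v - w v) *s v) = 0"
      using uw(3) unfolding g_def by (simp add: scale_left_diff_distrib sum_subtractf)
    have nd2: "\<not> (\<exists>c. (\<exists>v\<in>B. c v \<noteq> 0) \<and> (\<Sum>v\<in>B. c v *s v) = 0)"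
      using iB unfolding dependent_finite[OF fB] .
    have "\<forall>v\<in>B. u v - w v = 0"
    proof (rule ccontr)
      assume "\<not> (\<forall>v\<in>B. u v - w v = 0)"
      hence "\<exists>v\<in>B. u v - w v \<noteq> 0" by simp
      hence "\<exists>c. (\<exists>v\<in>B. c v \<noteq> 0) \<and> (\<Sum>v\<in>B. c v *s v) = 0"
        using sum0 by (intro exI[of _ "\<lambda>v. u v - w v"]) simp
      thus False using nd2 by simp
    qed
    thus "u = w" using uw(1,2) by (intro extensionalityI[of _ B]) (auto simp: PiE_def)
  qed
  ultimately have "card (span B) = card (PiE B (\<lambda>_. UNIV :: 'a set))" by (simp add: card_image)
  also have "\<dots> = card (UNIV::'a set) ^ card B" by (simp add: card_PiE fB)
  finally show ?thesis .
qed

lemma card_subspace: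
  assumes fa: "finite (UNIV::'a set)" and fS: "finite S" and sS: "subspace S"
  shows "card S = card (UNIV::'a set) ^ dim S"
proof -
  obtain B where B: "B \<subseteq> S" "independent B" "S \<subseteq> span B" "card B = dim S"
    using basis_exists by blast
  have "span B = S" using B sS span_minimal by blast
  moreover have "finite B" using B(1) fS finite_subset by blast
  ultimately show ?thesis using card_span_indep[OF fa _ B(2)] B(4) by metis
qed
end

definition colmat :: "('a::field^'n) set \<Rightarrow> ('a^'m^'n) set" where
  "colmat V = {M. \<forall>j. column j M \<in> V}"

lemma column_ops: "column j (x + y) = column j x + column j y"
  "column j (mscale c x) = c *s column j x" "column j 0 = 0"
  by (simp_all add: column_def mscale_def vec_eq_iff)

lemma colmat_subspace:
  assumes "vec.subspace V"
  shows "mat.subspace (colmat V :: ('a::field^'m^'n) set)"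
  using assms unfolding mat.subspace_def vec.subspace_def colmat_def
  by (simp add: column_ops)

lemma card_colmat:
  fixes V :: "('a::{field,finite}^'n) set"
  shows "card (colmat V :: ('a^'m^'n) set) = card V ^ CARD('m)"
proof -
  define h where "h M = (\<lambda>j. column j M)" for M :: "'a^'m^'n"
  have "bij_betw h (colmat V) (PiE UNIV (\<lambda>_. V))"
  proof (rule bij_betw_byWitness[where f' = "\<lambda>f. \<chi> i j. f j $ i"])
    show "\<forall>a\<in>colmat V. (\<chi> i j. h a j $ i) = a" by (simp add: h_def column_def vec_eq_iff)
    show "\<forall>a'\<in>PiE UNIV (\<lambda>_. V). h (\<chi> i j. a' j $ i) = a'" by (auto simp: h_def column_def vec_eq_iff)
    show "h ` colmat V \<subseteq> PiE UNIV (\<lambda>_. V)" by (auto simp: h_def colmat_def)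
    show "(\<lambda>f. \<chi> i j. f j $ i) ` PiE UNIV (\<lambda>_. V) \<subseteq> colmat V"
      by (auto simp: colmat_def column_def)
  qed
  hence "card (colmat V :: ('a^'m^'n) set) = card (PiE (UNIV::'m set) (\<lambda>_. V))" by (rule bij_betw_same_card)
  also have "\<dots> = card V ^ CARD('m)" by (simp add: card_PiE)
  finally show ?thesis .
qed

lemma card_field_ge2: "2 \<le> card (UNIV :: 'a::{field,finite} set)"
proof -
  have "card {0::'a, 1} = 2" by simp
  moreover have "card {0::'a, 1} \<le> card (UNIV :: 'a set)" by (rule card_mono) auto
  ultimately show ?thesis by simp
qed

lemma dim_colmat:
  fixes V :: "('a::{field,finite}^'n) set"
  assumes "vec.subspace V"
  shows "mat.dim (colmat V :: ('a^'m^'n) set) = CARD('m) * vec.dim V"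
proof -
  let ?q = "card (UNIV :: 'a set)"
  have "card (colmat V :: ('a^'m^'n) set) = ?q ^ mat.dim (colmat V :: ('a^'m^'n) set)"
    by (rule mat.card_subspace[OF _ _ colmat_subspace[OF assms]]) simp_all
  hence "?q ^ mat.dim (colmat V :: ('a^'m^'n) set) = card (colmat V :: ('a^'m^'n) set)" by simp
  also have "\<dots> = (?q ^ vec.dim V) ^ CARD('m)"
    using card_colmat[of V, where 'm='m] vec.card_subspace[OF _ _ assms] by simp
  also have "\<dots> = ?q ^ (CARD('m) * vec.dim V)" by (metis power_mult mult.commute)
  finally show ?thesis using card_field_ge2[where 'a='a] by (simp add: power_inject_exp)
qed

definition matB :: "('a::{field,finite}^'m^'n) set" where
  "matB = (SOME B. mat.independent B \<and> mat.span B = UNIV)"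

lemma matB: "mat.independent (matB :: ('a::{field,finite}^'m^'n) set) \<and> mat.span (matB :: ('a^'m^'n) set) = UNIV"
proof -
  obtain B :: "('a^'m^'n) set" where B: "mat.independent B" "UNIV \<subseteq> mat.span B"
    using mat.basis_exists[of UNIV] by blast
  hence "\<exists>B :: ('a^'m^'n) set. mat.independent B \<and> mat.span B = UNIV" by blast
  thus ?thesis unfolding matB_def by (rule someI_ex)
qed

lemma fdm: "finite_dimensional_vector_space (mscale :: 'a::{field,finite} \<Rightarrow> 'a^'m^'n \<Rightarrow> 'a^'m^'n) matB"
  apply (rule finite_dimensional_vector_space.intro)
   apply (rule mat.vector_space_axioms)
  apply (rule finite_dimensional_vector_space_axioms.intro)
proof -
  show "finite (matB :: ('a^'m^'n) set)" by (rule finite)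
  show "mat.independent (matB :: ('a^'m^'n) set)" using matB by (rule conjunct1)
  show "mat.span (matB :: ('a^'m^'n) set) = UNIV" using matB by (rule conjunct2)
qed

lemmas mat_dim_sums_Int = finite_dimensional_vector_space.dim_sums_Int[OF fdm]
lemmas mat_dim_subset = finite_dimensional_vector_space.dim_subset[OF fdm]


lemma colmat_UNIV: "colmat UNIV = UNIV" by (auto simp: colmat_def)



lemma rows_le_cols: "vec.dim (rows (M :: 'a::field^'m^'n)) \<le> vec.dim (columns M)"
proof -
  have "\<exists>W. W \<subseteq> vec.span (columns M) \<and> vec.independent W \<and> vec.span (columns M) \<subseteq> vec.span W \<and> card W = vec.dim (vec.span (columns M))"
    by (meson vec.basis_exists)
  then obtain W where W: "vec.independent W" "vec.span (columns M) \<subseteq> vec.span W" "card W = vec.dim (vec.span (columns M))"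
    by blast
  have "columns M \<subseteq> vec.span W" using W(2) vec.span_superset by blast
  moreover have "finite W" using W(1) by (rule vec.finiteI_independent)
  ultimately have "vec.dim (rows M) \<le> card W" by (rule row_le_col)
  thus ?thesis using W(3) by simp
qed

lemma rows_eq_cols: "vec.dim (rows (M :: 'a::field^'m^'n)) = vec.dim (columns M)"
  using rows_le_cols[of M] rows_le_cols[of "transpose M"] by simp

lemma rank_le_dim:
  fixes M :: "'a::field^'m^'n"
  assumes "columns M \<subseteq> V"
  shows "rank M \<le> vec.dim V"
proof -
  have "rank M = vec.dim (rows M)" by (simp add: row_rank_def_gen)
  also have "\<dots> \<le> vec.dim (columns M)" by (rule rows_le_cols)
  also have "\<dots> \<le> vec.dim V" using assms by (rule vec.dim_subset)
  finally show ?thesis .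
qed

lemma rank_eq_0_gen:
  fixes M :: "'a::field^'m^'n"
  assumes "rank M = 0" shows "M = 0"
proof -
  have "vec.dim (rows M) = 0" using assms by (simp add: row_rank_def_gen)
  hence "rows M \<subseteq> {0}" by simp
  hence "\<And>i. row i M = 0" unfolding rows_def by blast
  thus ?thesis by (simp add: row_def vec_eq_iff)
qed

lemma column_axis: "column j (A :: 'a::field^'m^'n) = A *v axis j 1"
  by (simp add: column_def matrix_vector_mult_def axis_def vec_eq_iff if_distrib sum.If_cases cong del: if_weak_cong)

lemma dim_range_mv: "vec.dim (range ((*v) (A :: 'a::field^'m^'n))) = vec.dim (columns A)"
proof (rule antisym)
  have "range ((*v) A) \<subseteq> vec.span (columns A)" using matrix_vector_mult_in_columnspace_gen by blast
  thus "vec.dim (range ((*v) A)) \<le> vec.dim (columns A)" by (rule vec.dim_mono)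
  have "columns A \<subseteq> range ((*v) A)" unfolding columns_def using column_axis by blast
  thus "vec.dim (columns A) \<le> vec.dim (range ((*v) A))" by (rule vec.dim_subset)
qed

lemma orth_subspace: "vec.subspace (orth J)"
  unfolding vec.subspace_def orth_def
  by (auto simp: distrib_right sum.distrib sum_distrib_left[symmetric] mult.assoc)

lemma dim_orth:
  fixes J :: "('a::field^'n) set"
  assumes sJ: "vec.subspace J"
  shows "vec.dim (orth J) + vec.dim J = CARD('n)"
proof -
  have "\<exists>B. B \<subseteq> J \<and> vec.independent B \<and> J \<subseteq> vec.span B \<and> card B = vec.dim J"
    by (meson vec.basis_exists)
  then obtain B where B: "B \<subseteq> J" "vec.independent B" "J \<subseteq> vec.span B" "card B = vec.dim J"
    by blast
  have fB: "finite B" using B(2) by (rule vec.finiteI_independent)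
  have spB: "vec.span B = J" using B(1,3) sJ vec.span_minimal by blast
  have "card B \<le> CARD('n)"
    using B(2) vec.independent_card_le_dim[of B UNIV] card_cart_basis[where 'a='a and 'i='n] by simp
  then obtain g where g: "g ` B \<subseteq> (UNIV::'n set)" "inj_on g B"
    using card_le_inj[OF fB finite[of "UNIV::'n set"]] by blast
  define A :: "'a^'n^'n" where "A = (\<chi> i. if i \<in> g ` B then the_inv_into B g i else 0)"
  have rowA: "\<And>b. b \<in> B \<Longrightarrow> A $ (g b) = b"
    unfolding A_def using g(2) by (simp add: the_inv_into_f_f)
  have rowA2: "\<And>i. A $ i \<in> J"
  proof -
    fix i
    show "A $ i \<in> J"
    proof (cases "i \<in> g ` B")
      case True
      then obtain b where "b \<in> B" "i = g b" by blast
      thus ?thesis using rowA B(1) by auto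
    next
      case False
      thus ?thesis unfolding A_def using vec.subspace_0[OF sJ] by simp
    qed
  qed
  have rowsA: "rows A \<subseteq> J" "B \<subseteq> rows A"
  proof -
    show "rows A \<subseteq> J" unfolding rows_def row_def using rowA2 by (auto simp: vec_lambda_eta)
    show "B \<subseteq> rows A"
    proof
      fix b assume "b \<in> B"
      hence "b = row (g b) A" using rowA by (simp add: row_def vec_lambda_eta)
      thus "b \<in> rows A" unfolding rows_def by blast
    qed
  qed
  have "vec.dim (rows A) = vec.dim J"
  proof (rule antisym)
    show "vec.dim (rows A) \<le> vec.dim J" using rowsA(1) by (rule vec.dim_subset)
    have "vec.dim J \<le> vec.dim B" using B(3) by (rule vec.dim_mono)
    also have "\<dots> \<le> vec.dim (rows A)" using rowsA(2) by (rule vec.dim_subset)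
    finally show "vec.dim J \<le> vec.dim (rows A)" .
  qed
  moreover have "orth J = {x. A *v x = 0}"
  proof (intro set_eqI iffI)
    fix x assume "x \<in> orth J"
    hence h: "\<And>y. y \<in> J \<Longrightarrow> (\<Sum>i\<in>UNIV. x$i * y$i) = 0" unfolding orth_def by blast
    have "\<And>i. (\<Sum>j\<in>UNIV. A$i$j * x$j) = 0"
    proof -
      fix i
      have "(\<Sum>j\<in>UNIV. x$j * A$i$j) = 0" using h[OF rowA2[of i]] .
      thus "(\<Sum>j\<in>UNIV. A$i$j * x$j) = 0" by (simp add: mult.commute)
    qed
    thus "x \<in> {x. A *v x = 0}" by (simp add: matrix_vector_mult_def vec_eq_iff)
  next
    fix x assume "x \<in> {x. A *v x = 0}"
    hence x0: "\<And>i. (\<Sum>j\<in>UNIV. A$i$j * x$j) = 0" by (simp add: matrix_vector_mult_def vec_eq_iff)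
    define P where "P = {y::'a^'n. (\<Sum>i\<in>UNIV. x$i * y$i) = 0}"
    have sP: "vec.subspace P" unfolding vec.subspace_def P_def
      by (auto simp: distrib_left sum.distrib sum_distrib_left[symmetric] mult.left_commute)
    have "B \<subseteq> P"
    proof
      fix b assume b: "b \<in> B"
      have "(\<Sum>j\<in>UNIV. A$(g b)$j * x$j) = 0" by (rule x0)
      thus "b \<in> P" using rowA[OF b] by (simp add: P_def mult.commute)
    qed
    hence "vec.span B \<subseteq> P" using sP by (rule vec.span_minimal)
    hence "J \<subseteq> P" using spB by simp
    thus "x \<in> orth J" unfolding orth_def P_def by blast
  qed
  moreover have "vec.dim {x. A *v x = 0} + vec.dim (range ((*v) A)) = CARD('n)"
    by (rule rank_nullity_vec) (rule matrix_vector_mul_linear_gen)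
  ultimately show ?thesis using dim_range_mv[of A] rows_eq_cols[of A] by simp
qed



lemmas mat_dim_eq_0 = finite_dimensional_vector_space.dim_eq_0[OF fdm]

lemma columns_colmat: "columns M \<subseteq> V \<longleftrightarrow> M \<in> colmat V"
  unfolding columns_def colmat_def by blast

lemma col_subcode_eq:
  assumes "vec.subspace S"
  shows "col_subcode C S = C \<inter> colmat S"
proof -
  have "\<And>M. colsp M \<subseteq> S \<longleftrightarrow> columns M \<subseteq> S"
    unfolding colsp_def using assms vec.span_minimal vec.span_superset by blast
  thus ?thesis unfolding col_subcode_def by (auto simp: columns_colmat)
qed

lemma singleton_gen:
  fixes D :: "('a::{field,finite}^'m^'n) set"
  assumes sD: "mat.subspace D" and DW: "D \<subseteq> colmat W" and sW: "vec.subspace W"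
    and rk: "\<And>M. M \<in> D \<Longrightarrow> M \<noteq> 0 \<Longrightarrow> d \<le> rank M"
    and dW: "d - 1 \<le> vec.dim W" and d1: "1 \<le> d"
  shows "mat.dim D + CARD('m) * (d - 1) \<le> CARD('m) * vec.dim W"
proof -
  have "\<exists>B. B \<subseteq> W \<and> vec.independent B \<and> W \<subseteq> vec.span B \<and> card B = vec.dim W"
    by (meson vec.basis_exists)
  then obtain B where B: "B \<subseteq> W" "vec.independent B" "W \<subseteq> vec.span B" "card B = vec.dim W"
    by blast
  obtain B2 where B2: "B2 \<subseteq> B" "card B2 = d - 1" "finite B2"
    using obtain_subset_with_card_n[of "d - 1" B] dW B(4) by metis
  define W2 where "W2 = vec.span B2"
  have iB2: "vec.independent B2" using B(2) B2(1) by (rule vec.independent_mono)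
  have dW2: "vec.dim W2 = d - 1" unfolding W2_def using iB2 B2(2) by (simp add: vec.dim_eq_card_independent)
  have sW2: "vec.subspace W2" unfolding W2_def by (rule vec.subspace_span)
  have W2W: "W2 \<subseteq> W" unfolding W2_def using B2(1) B(1) sW by (meson vec.span_minimal order_trans)
  have int0: "D \<inter> colmat W2 \<subseteq> {0}"
  proof
    fix M assume M: "M \<in> D \<inter> colmat W2"
    show "M \<in> {0}"
    proof (rule ccontr)
      assume "M \<notin> {0}"
      hence "d \<le> rank M" using rk M by auto
      moreover have "rank M \<le> vec.dim W2" using M by (intro rank_le_dim) (simp add: columns_colmat)
      ultimately show False using dW2 d1 by simp
    qed
  qed
  have "mat.dim {x + y |x y. x \<in> D \<and> y \<in> colmat W2} + mat.dim (D \<inter> colmat W2) = mat.dim D + mat.dim (colmat W2 :: ('a^'m^'n) set)"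
    by (rule mat_dim_sums_Int[OF sD colmat_subspace[OF sW2]])
  moreover have "mat.dim (D \<inter> colmat W2) = 0" using int0 by (simp add: mat_dim_eq_0)
  moreover have "mat.dim (colmat W2 :: ('a^'m^'n) set) = CARD('m) * (d - 1)"
    using dim_colmat[OF sW2] dW2 by simp
  moreover have "mat.dim {x + y |x y. x \<in> D \<and> y \<in> colmat W2} \<le> mat.dim (colmat W :: ('a^'m^'n) set)"
  proof (rule mat_dim_subset)
    show "{x + y |x y. x \<in> D \<and> y \<in> colmat W2} \<subseteq> colmat W"
    proof
      fix z assume "z \<in> {x + y |x y. x \<in> D \<and> y \<in> colmat W2}"
      then obtain x y where xy: "z = x + y" "x \<in> D" "y \<in> colmat W2" by blast
      have "x \<in> colmat W" using xy DW by blast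
      moreover have "y \<in> colmat W" using xy(3) W2W unfolding colmat_def by blast
      ultimately show "z \<in> colmat W" using xy(1) vec.subspace_add[OF sW]
        unfolding colmat_def by (simp add: column_ops)
    qed
  qed
  moreover have "mat.dim (colmat W :: ('a^'m^'n) set) = CARD('m) * vec.dim W"
    by (rule dim_colmat[OF sW])
  ultimately show ?thesis by linarith
qed



theorem theorem5p4:
  fixes C :: "('a::{field,finite}^'m^'n) set" and d :: nat
  assumes "2 \<le> CARD('n)" and "CARD('n) \<le> CARD('m)"
    and "mat.subspace C" and "C \<noteq> {0}"
    and "d = min_dist C"
  shows "(is_MRD C \<longleftrightarrow>
          (\<forall>J. vec.subspace J \<and> vec.dim J \<le> CARD('n) - d + 1 \<longrightarrow> rho_c C J = real (vec.dim J)))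
       \<and> (is_MRD C \<longleftrightarrow>
          (\<exists>J. vec.subspace J \<and> vec.dim J = CARD('n) - d + 1 \<and> rho_c C J = real (vec.dim J)))"
proof -
  let ?n = "CARD('n)" and ?m = "CARD('m)"
  note sC = assms(3)
  define S where "S = {rank M | M. M \<in> C \<and> M \<noteq> 0}"
  have rkn: "rank M \<le> ?n" for M :: "'a^'m^'n"
  proof -
    have "rank M \<le> vec.dim (UNIV :: ('a^'n) set)" by (rule rank_le_dim) simp
    thus ?thesis by (simp only: vec_dim_card)
  qed
  have "S \<subseteq> {0..?n}"
  proof
    fix k assume "k \<in> S"
    then obtain M :: "'a^'m^'n" where "k = rank M" unfolding S_def by blast
    thus "k \<in> {0..?n}" using rkn[of M] by simp
  qed
  hence fS: "finite S" by (rule finite_subset) simp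
  obtain M0 where M0: "M0 \<in> C" "M0 \<noteq> 0" using assms(4) mat.subspace_0[OF sC] by blast
  have neS: "S \<noteq> {}" unfolding S_def using M0 by blast
  have dS: "d = Min S" using assms(5) unfolding min_dist_def S_def by simp
  have dmin: "\<And>M. M \<in> C \<Longrightarrow> M \<noteq> 0 \<Longrightarrow> d \<le> rank M"
    unfolding dS using fS by (intro Min_le) (auto simp: S_def)
  have "d \<in> S" unfolding dS using fS neS by (rule Min_in)
  then obtain M1 where M1: "M1 \<in> C" "M1 \<noteq> 0" "d = rank M1" unfolding S_def by blast
  have d1: "1 \<le> d" using M1 rank_eq_0_gen[of M1] by (cases "d = 0") auto
  have dn: "d \<le> ?n" using M1(3) rkn by simp
  have mpos: "0 < ?m" by simp
  have D_props: "col_subcode C (orth J) = C \<inter> colmat (orth J)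
      \<and> mat.subspace (col_subcode C (orth J))
      \<and> vec.dim (orth J) + vec.dim J = ?n" if sJ: "vec.subspace J" for J :: "('a^'n) set"
  proof -
    have e: "col_subcode C (orth J) = C \<inter> colmat (orth J)" by (rule col_subcode_eq[OF orth_subspace])
    have "mat.subspace (C \<inter> colmat (orth J))"
      by (rule mat.subspace_inter[OF sC colmat_subspace[OF orth_subspace]])
    thus ?thesis using e dim_orth[OF sJ] by simp
  qed
  have dimUNIV: "mat.dim (UNIV :: ('a^'m^'n) set) = ?m * ?n"
    using dim_colmat[of "UNIV :: ('a^'n) set", where 'm='m] colmat_UNIV vec_dim_card
    by (metis vec.subspace_UNIV)
  have AB: "rho_c C J = real (vec.dim J)"
    if MRD: "is_MRD C" and sJ: "vec.subspace J" and jle: "vec.dim J \<le> ?n - d + 1" for J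
  proof -
    define D where "D = col_subcode C (orth J)"
    define w where "w = vec.dim (orth J)"
    define j where "j = vec.dim J"
    have De: "D = C \<inter> colmat (orth J)" and sD: "mat.subspace D" and wj: "w + j = ?n"
      using D_props[OF sJ] unfolding D_def w_def j_def by auto
    have dimC: "mat.dim C = ?m * (?n - d + 1)" using MRD assms(5) unfolding is_MRD_def by simp
    have "mat.dim D + ?m * (d - 1) \<le> ?m * w"
      unfolding w_def
    proof (rule singleton_gen[OF sD _ orth_subspace])
      show "D \<subseteq> colmat (orth J)" using De by blast
      show "\<And>M. M \<in> D \<Longrightarrow> M \<noteq> 0 \<Longrightarrow> d \<le> rank M" using De dmin by blast
      show "d - 1 \<le> vec.dim (orth J)" using wj jle d1 dn unfolding w_def j_def by linarith
      show "1 \<le> d" by (rule d1)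
    qed
    moreover have "mat.dim {x + y |x y. x \<in> C \<and> y \<in> colmat (orth J)} + mat.dim D
        = mat.dim C + mat.dim (colmat (orth J) :: ('a^'m^'n) set)"
      unfolding De by (rule mat_dim_sums_Int[OF sC colmat_subspace[OF orth_subspace]])
    moreover have "mat.dim {x + y |x y. x \<in> C \<and> y \<in> colmat (orth J)} \<le> ?m * ?n"
      using mat_dim_subset[of "{x + y |x y. x \<in> C \<and> y \<in> colmat (orth J)}" UNIV] dimUNIV by simp
    moreover have "mat.dim (colmat (orth J) :: ('a^'m^'n) set) = ?m * w"
      unfolding w_def by (rule dim_colmat[OF orth_subspace])
    moreover have "?m * (?n - d + 1) + ?m * (d - 1) = ?m * ?n"
    proof -
      have e1: "(?n - d + 1) + (d - 1) = ?n" using d1 dn by simp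
      show ?thesis by (simp only: distrib_left[symmetric] e1)
    qed
    moreover have "?m * w + ?m * j = ?m * ?n" by (simp only: distrib_left[symmetric] wj)
    ultimately have "mat.dim C = mat.dim D + ?m * j" using dimC by linarith
    hence "real (mat.dim C) - real (mat.dim D) = real ?m * real j" by simp
    thus ?thesis unfolding rho_c_def D_def[symmetric] j_def using mpos by simp
  qed
  have CA: "is_MRD C"
    if sJ: "vec.subspace J" and jeq: "vec.dim J = ?n - d + 1" and rho: "rho_c C J = real (vec.dim J)" for J
  proof -
    define D where "D = col_subcode C (orth J)"
    have De: "D = C \<inter> colmat (orth J)" and wj: "vec.dim (orth J) + vec.dim J = ?n"
      using D_props[OF sJ] unfolding D_def by auto
    have "D \<subseteq> {0}"
    proof
      fix M assume M: "M \<in> D"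
      show "M \<in> {0}"
      proof (rule ccontr)
        assume "M \<notin> {0}"
        hence "d \<le> rank M" using dmin M De by auto
        moreover have "rank M \<le> vec.dim (orth J)" using M De by (intro rank_le_dim) (simp add: columns_colmat)
        ultimately show False using wj jeq d1 dn by linarith
      qed
    qed
    hence "mat.dim D = 0" by (simp add: mat_dim_eq_0)
    hence "real (mat.dim C) / real ?m = real (?n - d + 1)"
      using rho jeq unfolding rho_c_def D_def[symmetric] by simp
    hence "real (mat.dim C) = real (?m * (?n - d + 1))" using mpos by (simp add: field_simps)
    hence "mat.dim C = ?m * (?n - d + 1)" by (simp only: of_nat_eq_iff)
    thus ?thesis unfolding is_MRD_def using assms(5) by simp
  qed
  have "?n - d + 1 \<le> card (cart_basis :: ('a^'n) set)"
    using d1 dn card_cart_basis[where 'a='a and 'i='n] by simp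
  then obtain T where T: "T \<subseteq> (cart_basis :: ('a^'n) set)" "card T = ?n - d + 1" "finite T"
    by (rule obtain_subset_with_card_n)
  define J0 where "J0 = vec.span T"
  have sJ0: "vec.subspace J0" unfolding J0_def by (rule vec.subspace_span)
  have dJ0: "vec.dim J0 = ?n - d + 1"
    unfolding J0_def using vec.independent_mono[OF vec.independent_Basis T(1)] T(2)
    by (simp add: vec.dim_eq_card_independent)
  have BC: "(\<exists>J. vec.subspace J \<and> vec.dim J = ?n - d + 1 \<and> rho_c C J = real (vec.dim J))"
    if "\<forall>J. vec.subspace J \<and> vec.dim J \<le> ?n - d + 1 \<longrightarrow> rho_c C J = real (vec.dim J)"
    using that sJ0 dJ0 by auto
  show ?thesis
  proof (intro conjI iffI)
    show "\<forall>J. vec.subspace J \<and> vec.dim J \<le> ?n - d + 1 \<longrightarrow> rho_c C J = real (vec.dim J)" if "is_MRD C"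
      using AB[OF that] by blast
    show "is_MRD C" if "\<forall>J. vec.subspace J \<and> vec.dim J \<le> ?n - d + 1 \<longrightarrow> rho_c C J = real (vec.dim J)"
      using BC[OF that] CA by blast
    show "\<exists>J. vec.subspace J \<and> vec.dim J = ?n - d + 1 \<and> rho_c C J = real (vec.dim J)" if "is_MRD C"
      using AB[OF that sJ0] dJ0 sJ0 by auto
    show "is_MRD C" if "\<exists>J. vec.subspace J \<and> vec.dim J = ?n - d + 1 \<and> rho_c C J = real (vec.dim J)"
      using that CA by blast
  qed
qed

end
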